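(* Under Total Store Order, in the limit $m\to\infty$: $\Pr[L_0]=1/3$, and for every integer $\mu>0$, $\Pr[L_\mu]\ge \tfrac{4}{7}\cdot 2^{-\mu}$.
   Context: Fix $m\ge 1$. A random program is a sequence $x_1,\dots,x_{m+2}$ of memory operations, each with a type in $\{\mathrm{LD},\mathrm{ST}\}$: $x_1,\dots,x_m$ have i.i.d. types, each $\mathrm{ST}$ with probability $1/2$ and $\mathrm{LD}$ with probability $1/2$; $x_{m+1}$ (the critical load) has type $\mathrm{LD}$ and $x_{m+2}$ (the critical store) has type $\mathrm{ST}$. The initial order is $S_0=(x_1,\dots,x_{m+2})$. A memory model is specified by the set of ordered type pairs $(\tau_1,\tau_2)$ for which an instruction of type $\tau_2$ may be moved ahead of an immediately preceding instruction of type $\tau_1$: Sequential Consistency (SC) allows no pair; Total Store Order (TSO) allows only the pair $(\mathrm{ST},\mathrm{LD})$ (a load may move ahead of a preceding store); Weak Ordering (WO) allows all four pairs. The settling process runs rounds $r=1,\dots,m+2$. Before round $r$, the current order $S_{r-1}$ consists of $x_1,\dots,x_{r-1}$ in some order in positions $1,\dots,r-1$, followed by $x_r,\dots,x_{m+2}$ in positions $r,\dots,m+2$. In round $r$, instruction $x_r$ (starting at position $r$) repeatedly attempts to swap with the instruction immediately preceding it in the current order: the attempt fails automatically if the pair (type of the preceding instruction, type of $x_r$) is not allowed by the memory model, or if $x_r$ is the critical store and the preceding instruction is the critical load; otherwise the attempt succeeds independently with probability $1/2$. The round ends when an attempt fails or $x_r$ reaches position $1$; the resulting order is $S_r$. For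 an integer $\mu\ge 0$ with $\mu<m$, $L_\mu$ is the event that in the order $S_m$ (the order just before the critical load is settled) the instructions at positions $m-\mu+1,\dots,m$ all have type $\mathrm{ST}$ and the instruction at position $m-\mu$ has type $\mathrm{LD}$; i.e. exactly $\mu$ stores immediately precede the critical load in $S_m$. *)

theory Defs
  imports "HOL-Probability.Probability"
begin

datatype optype = LD | ST

text \<open>A memory model = set of allowed ordered type pairs (preceding type, moving type).\<close>
definition SC :: "(optype \<times> optype) set" where "SC = {}"
definition TSO :: "(optype \<times> optype) set" where "TSO = {(ST, LD)}"
definition WO :: "(optype \<times> optype) set" where "WO = UNIV"

text \<open>Instructions are identified by their index 1..m+2; x_(m+1) is the critical load,
 x_(m+2) the critical store.\<close>
definition tyf :: "nat \<Rightarrow> optype list \<Rightarrow> nat \<Rightarrow> optype" where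
  "tyf m ts i = (if 1 \<le> i \<and> i \<le> m then ts ! (i - 1) else if i = m + 1 then LD else ST)"

text \<open>One round: instruction x moves backwards through the preceding instructions.
 The preceding instructions are given in reversed order (head = immediately preceding).
 The result is the new order of the preceding instructions together with x, again reversed.\<close>
fun settle :: "(optype \<times> optype) set \<Rightarrow> (nat \<Rightarrow> optype) \<Rightarrow> nat \<Rightarrow> nat list \<Rightarrow> nat \<Rightarrow> nat list pmf" where
  "settle A ty m [] x = return_pmf [x]"
| "settle A ty m (y # ys) x =
     (if (ty y, ty x) \<notin> A \<or> (x = m + 2 \<and> y = m + 1) then return_pmf (x # y # ys)
      else bind_pmf (bernoulli_pmf (1/2))
             (\<lambda>b. if b then map_pmf (\<lambda>zs. y # zs) (settle A ty m ys x)
                  else return_pmf (x # y # ys)))"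

text \<open>run A ty m r = distribution of the order of x_1..x_r in positions 1..r after round r
 (the remaining positions r+1..m+2 hold x_(r+1),...,x_(m+2) in order).\<close>
fun run :: "(optype \<times> optype) set \<Rightarrow> (nat \<Rightarrow> optype) \<Rightarrow> nat \<Rightarrow> nat \<Rightarrow> nat list pmf" where
  "run A ty m 0 = return_pmf []"
| "run A ty m (Suc r) = bind_pmf (run A ty m r) (\<lambda>p. map_pmf rev (settle A ty m (rev p) (Suc r)))"

definition coin_type :: "optype pmf" where
  "coin_type = map_pmf (\<lambda>b. if b then ST else LD) (bernoulli_pmf (1/2))"

fun rand_types :: "nat \<Rightarrow> optype list pmf" where
  "rand_types 0 = return_pmf []"
| "rand_types (Suc n) = bind_pmf (rand_types n) (\<lambda>ts. map_pmf (\<lambda>t. ts @ [t]) coin_type)"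

text \<open>Joint tso_experiment: (types of x_1..x_m, order S_m restricted to positions 1..m).\<close>
definition tso_experiment :: "(optype \<times> optype) set \<Rightarrow> nat \<Rightarrow> (optype list \<times> nat list) pmf" where
  "tso_experiment A m = bind_pmf (rand_types m)
      (\<lambda>ts. map_pmf (\<lambda>ordr. (ts, ordr)) (run A (tyf m ts) m m))"

definition L_event :: "nat \<Rightarrow> nat \<Rightarrow> (optype list \<times> nat list) set" where
  "L_event m mu = {(ts, ordr). (\<forall>j\<in>{m - mu + 1..m}. tyf m ts (ordr ! (j - 1)) = ST)
                           \<and> tyf m ts (ordr ! (m - mu - 1)) = LD}"

definition prob_L :: "(optype \<times> optype) set \<Rightarrow> nat \<Rightarrow> nat \<Rightarrow> real" where
  "prob_L A m mu = measure_pmf.prob (tso_experiment A m) (L_event m mu)"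

end

theory Submission
  imports Defs
begin

fun ins :: "nat \<Rightarrow> nat pmf" where
  "ins 0 = return_pmf 0"
| "ins (Suc k) = bind_pmf (bernoulli_pmf (1/2)) (\<lambda>b. if b then map_pmf Suc (ins k) else return_pmf 0)"

definition step :: "nat \<Rightarrow> nat pmf" where
  "step k = bind_pmf (bernoulli_pmf (1/2)) (\<lambda>b. if b then return_pmf (Suc k) else ins k)"

fun Kd :: "nat \<Rightarrow> nat pmf" where
  "Kd 0 = return_pmf 0"
| "Kd (Suc m) = bind_pmf (Kd m) step"

definition tw :: "(nat \<Rightarrow> optype) \<Rightarrow> nat list \<Rightarrow> nat" where
  "tw ty zs = length (takeWhile (\<lambda>i. ty i = ST) zs)"

lemma settle_tw:
  assumes "x \<noteq> m + 2"
  shows "map_pmf (tw ty) (settle TSO ty m ys x) =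
     (if ty x = ST then return_pmf (Suc (tw ty ys)) else ins (tw ty ys))"
proof (induction ys)
  case Nil
  then show ?case by (cases "ty x") (auto simp: tw_def)
next
  case (Cons y ys)
  show ?case
  proof (cases "ty x")
    case LD
    show ?thesis
    proof (cases "ty y")
      case LD
      then show ?thesis using \<open>ty x = LD\<close> by (simp add: TSO_def tw_def)
    next
      case ST
      have "map_pmf (tw ty) (settle TSO ty m (y # ys) x) =
        bind_pmf (bernoulli_pmf (1/2)) (\<lambda>b. if b then map_pmf Suc (map_pmf (tw ty) (settle TSO ty m ys x)) else return_pmf 0)"
        using ST \<open>ty x = LD\<close> assms
        by (auto simp: TSO_def map_bind_pmf map_pmf_comp tw_def intro!: bind_pmf_cong)
      also have "\<dots> = ins (tw ty (y # ys))"
      proof -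
        have IH: "map_pmf (tw ty) (settle TSO ty m ys x) = ins (tw ty ys)"
          using Cons \<open>ty x = LD\<close> by simp
        show ?thesis using ST by (subst IH) (unfold tw_def, simp)
      qed
      finally show ?thesis using \<open>ty x = LD\<close> by simp
    qed
  next
    case ST
    then show ?thesis by (cases "ty y") (auto simp: TSO_def tw_def)
  qed
qed

lemma settle_set:
  "zs \<in> set_pmf (settle A ty m ys x) \<Longrightarrow> set zs = insert x (set ys) \<and> length zs = Suc (length ys)"
  by (induction ys arbitrary: zs) (auto split: if_splits)

lemma settle_cong:
  "(\<forall>i \<in> insert x (set ys). ty i = ty' i) \<Longrightarrow> settle A ty m ys x = settle A ty' m ys x"
proof (induction ys)
  case Nil
  then show ?case by simp
next
  case (Cons y ys)
  then have IH: "settle A ty m ys x = settle A ty' m ys x" by simp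
  from Cons.prems show ?case by (simp only: settle.simps IH) simp
qed

lemma run_set:
  "p \<in> set_pmf (run A ty m r) \<Longrightarrow> set p = {1..r} \<and> length p = r"
proof (induction r arbitrary: p)
  case 0
  then show ?case by simp
next
  case (Suc r)
  then obtain q zs where q: "q \<in> set_pmf (run A ty m r)" and zs: "zs \<in> set_pmf (settle A ty m (rev q) (Suc r))"
    and p: "p = rev zs" by auto
  from Suc.IH[OF q] settle_set[OF zs] show ?case
    using p by auto
qed

lemma run_cong:
  "(\<forall>i\<in>{1..r}. ty i = ty' i) \<Longrightarrow> run A ty m r = run A ty' m r"
proof (induction r)
  case 0
  then show ?case by simp
next
  case (Suc r)
  then have IH: "run A ty m r = run A ty' m r" by auto
  show ?case
    unfolding run.simps IH
  proof (intro bind_pmf_cong refl)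
    fix p assume "p \<in> set_pmf (run A ty' m r)"
    then have "set p = {1..r}" using run_set by blast
    then show "map_pmf rev (settle A ty m (rev p) (Suc r)) = map_pmf rev (settle A ty' m (rev p) (Suc r))"
      using Suc.prems by (subst settle_cong[of "Suc r" "rev p" ty ty']) auto
  qed
qed

lemma rand_types_len: "ts \<in> set_pmf (rand_types r) \<Longrightarrow> length ts = r"
  by (induction r arbitrary: ts) (auto)

definition E :: "nat \<Rightarrow> nat \<Rightarrow> (optype list \<times> nat list) pmf" where
  "E m r = bind_pmf (rand_types r) (\<lambda>ts. map_pmf (\<lambda>q. (ts, q)) (run TSO (tyf m ts) m r))"

definition sig :: "nat \<Rightarrow> optype list \<times> nat list \<Rightarrow> nat" where
  "sig m = (\<lambda>(ts, q). tw (tyf m ts) (rev q))"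

lemma tyf_app: "length ts = r \<Longrightarrow> i \<in> {1..r} \<Longrightarrow> r < m \<Longrightarrow> tyf m (ts @ [t]) i = tyf m ts i"
  by (auto simp: tyf_def nth_append)

lemma tyf_last: "length ts = r \<Longrightarrow> r < m \<Longrightarrow> tyf m (ts @ [t]) (Suc r) = t"
  by (auto simp: tyf_def nth_append)

lemma inner:
  assumes "length ts = r" "set q = {1..r}" "r < m"
  shows "bind_pmf coin_type (\<lambda>t. map_pmf (\<lambda>zs. sig m (ts @ [t], rev zs))
            (settle TSO (tyf m (ts @ [t])) m (rev q) (Suc r))) = step (sig m (ts, q))"
proof -
  have tw_eq: "tw (tyf m (ts @ [t])) (rev q) = sig m (ts, q)" for t
    unfolding sig_def tw_def using assms
    by (auto intro!: arg_cong[where f=length] takeWhile_cong simp: tyf_app)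
  have "map_pmf (\<lambda>zs. sig m (ts @ [t], rev zs)) (settle TSO (tyf m (ts @ [t])) m (rev q) (Suc r))
      = (if t = ST then return_pmf (Suc (sig m (ts, q))) else ins (sig m (ts, q)))" for t
  proof -
    have "map_pmf (\<lambda>zs. sig m (ts @ [t], rev zs)) (settle TSO (tyf m (ts @ [t])) m (rev q) (Suc r))
      = map_pmf (tw (tyf m (ts @ [t]))) (settle TSO (tyf m (ts @ [t])) m (rev q) (Suc r))"
      by (simp add: sig_def)
    also have "\<dots> = (if t = ST then return_pmf (Suc (sig m (ts, q))) else ins (sig m (ts, q)))"
      using assms by (subst settle_tw) (auto simp: tw_eq tyf_last)
    finally show ?thesis .
  qed
  then show ?thesis
    by (simp add: coin_type_def bind_map_pmf step_def) (rule bind_pmf_cong, auto)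
qed

lemma main: "r \<le> m \<Longrightarrow> map_pmf (sig m) (E m r) = Kd r"
proof (induction r)
  case 0
  then show ?case by (simp add: E_def sig_def tw_def bind_return_pmf)
next
  case (Suc r)
  then have rm: "r < m" by simp
  have "map_pmf (sig m) (E m (Suc r)) =
     bind_pmf (rand_types r) (\<lambda>ts. bind_pmf coin_type (\<lambda>t.
        map_pmf (sig m) (map_pmf (\<lambda>q. (ts @ [t], q)) (run TSO (tyf m (ts @ [t])) m (Suc r)))))"
    by (simp add: E_def bind_assoc_pmf bind_map_pmf map_bind_pmf)
  also have "\<dots> = bind_pmf (rand_types r) (\<lambda>ts. bind_pmf (run TSO (tyf m ts) m r) (\<lambda>q.
         step (sig m (ts, q))))"
  proof (intro bind_pmf_cong refl)
    fix ts assume ts: "ts \<in> set_pmf (rand_types r)"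
    then have lts: "length ts = r" by (rule rand_types_len)
    have "bind_pmf coin_type (\<lambda>t.
        map_pmf (sig m) (map_pmf (\<lambda>q. (ts @ [t], q)) (run TSO (tyf m (ts @ [t])) m (Suc r))))
      = bind_pmf coin_type (\<lambda>t. bind_pmf (run TSO (tyf m ts) m r) (\<lambda>q.
          map_pmf (\<lambda>zs. sig m (ts @ [t], rev zs)) (settle TSO (tyf m (ts @ [t])) m (rev q) (Suc r))))"
    proof (intro bind_pmf_cong refl)
      fix t
      have "run TSO (tyf m (ts @ [t])) m r = run TSO (tyf m ts) m r"
        using lts rm by (intro run_cong) (simp add: tyf_app)
      then show "map_pmf (sig m) (map_pmf (\<lambda>q. (ts @ [t], q)) (run TSO (tyf m (ts @ [t])) m (Suc r))) =
        bind_pmf (run TSO (tyf m ts) m r) (\<lambda>q.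
          map_pmf (\<lambda>zs. sig m (ts @ [t], rev zs)) (settle TSO (tyf m (ts @ [t])) m (rev q) (Suc r)))"
        by (simp add: map_bind_pmf map_pmf_comp)
    qed
    also have "\<dots> = bind_pmf (run TSO (tyf m ts) m r) (\<lambda>q. bind_pmf coin_type (\<lambda>t.
          map_pmf (\<lambda>zs. sig m (ts @ [t], rev zs)) (settle TSO (tyf m (ts @ [t])) m (rev q) (Suc r))))"
      by (rule bind_commute_pmf)
    also have "\<dots> = bind_pmf (run TSO (tyf m ts) m r) (\<lambda>q. step (sig m (ts, q)))"
    proof (intro bind_pmf_cong refl)
      fix q assume "q \<in> set_pmf (run TSO (tyf m ts) m r)"
      then have "set q = {1..r}" using run_set by blast
      then show "bind_pmf coin_type (\<lambda>t.
          map_pmf (\<lambda>zs. sig m (ts @ [t], rev zs)) (settle TSO (tyf m (ts @ [t])) m (rev q) (Suc r)))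
         = step (sig m (ts, q))"
        using inner lts rm by blast
    qed
    finally show "bind_pmf coin_type (\<lambda>t.
        map_pmf (sig m) (map_pmf (\<lambda>q. (ts @ [t], q)) (run TSO (tyf m (ts @ [t])) m (Suc r))))
      = bind_pmf (run TSO (tyf m ts) m r) (\<lambda>q. step (sig m (ts, q)))" .
  qed
  also have "\<dots> = bind_pmf (map_pmf (sig m) (E m r)) step"
    by (simp add: E_def bind_assoc_pmf bind_map_pmf map_bind_pmf)
  also have "\<dots> = Kd (Suc r)"
    using Suc by simp
  finally show ?case .
qed


lemma tw_len_iff:
  "mu < length l \<Longrightarrow> length (takeWhile P l) = mu \<longleftrightarrow> (\<forall>i<mu. P (l ! i)) \<and> \<not> P (l ! mu)"
proof (induction l arbitrary: mu)
  case Nil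
  then show ?case by simp
next
  case (Cons a l)
  show ?case
  proof (cases mu)
    case 0
    then show ?thesis by simp
  next
    case (Suc n)
    then show ?thesis using Cons.IH[of n] Cons.prems
      by (simp add: All_less_Suc2)
  qed
qed

lemma optype_neq_ST: "(t \<noteq> ST) = (t = LD)"
  by (cases t) auto

lemma event_iff:
  assumes "length q = m" "mu < m"
  shows "(ts, q) \<in> L_event m mu \<longleftrightarrow> sig m (ts, q) = mu"
proof -
  define P where "P = (\<lambda>i. tyf m ts i = ST)"
  have "sig m (ts, q) = mu \<longleftrightarrow> (\<forall>i<mu. P (rev q ! i)) \<and> \<not> P (rev q ! mu)"
    unfolding sig_def tw_def P_def using assms by (simp add: tw_len_iff)
  also have "\<dots> \<longleftrightarrow> (\<forall>i<mu. P (q ! (m - Suc i))) \<and> \<not> P (q ! (m - mu - 1))"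
    using assms by (simp add: rev_nth)
  also have "(\<forall>i<mu. P (q ! (m - Suc i))) \<longleftrightarrow> (\<forall>j\<in>{m - mu + 1..m}. P (q ! (j - 1)))"
  proof
    assume H: "\<forall>i<mu. P (q ! (m - Suc i))"
    show "\<forall>j\<in>{m - mu + 1..m}. P (q ! (j - 1))"
    proof
      fix j assume j: "j \<in> {m - mu + 1..m}"
      then have "m - j < mu" "m - Suc (m - j) = j - 1" using assms by auto
      then show "P (q ! (j - 1))" using H by metis
    qed
  next
    assume H: "\<forall>j\<in>{m - mu + 1..m}. P (q ! (j - 1))"
    show "\<forall>i<mu. P (q ! (m - Suc i))"
    proof (intro allI impI)
      fix i assume i: "i < mu"
      then have "m - i \<in> {m - mu + 1..m}" "m - i - 1 = m - Suc i" using assms by auto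
      then show "P (q ! (m - Suc i))" using H by metis
    qed
  qed
  finally show ?thesis
    unfolding L_event_def P_def by (simp add: optype_neq_ST)
qed

lemma prob_L_eq:
  assumes "mu < m"
  shows "prob_L TSO m mu = pmf (Kd m) mu"
proof -
  have "prob_L TSO m mu = measure (E m m) (L_event m mu)"
    by (simp add: prob_L_def tso_experiment_def E_def)
  also have "\<dots> = measure (E m m) (L_event m mu \<inter> set_pmf (E m m))"
    by (simp add: measure_Int_set_pmf)
  also have "L_event m mu \<inter> set_pmf (E m m) = sig m -` {mu} \<inter> set_pmf (E m m)"
  proof -
    have "\<And>x. x \<in> set_pmf (E m m) \<Longrightarrow> x \<in> L_event m mu \<longleftrightarrow> sig m x = mu"
    proof -
      fix x assume "x \<in> set_pmf (E m m)"
      then obtain ts q where x: "x = (ts, q)" and "q \<in> set_pmf (run TSO (tyf m ts) m m)"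
        by (auto simp: E_def)
      then have "length q = m" using run_set by blast
      then show "x \<in> L_event m mu \<longleftrightarrow> sig m x = mu" using x assms event_iff by blast
    qed
    then show ?thesis by blast
  qed
  also have "measure (E m m) (sig m -` {mu} \<inter> set_pmf (E m m)) = measure (map_pmf (sig m) (E m m)) {mu}"
    by (simp add: measure_Int_set_pmf)
  also have "\<dots> = pmf (Kd m) mu"
    by (simp add: main measure_pmf_single)
  finally show ?thesis .
qed


lemma pmf_map_Suc: "pmf (map_pmf Suc M) k = (if k = 0 then 0 else pmf M (k - 1))"
proof (cases k)
  case 0
  have "Suc -` {0} = {}" by auto
  then show ?thesis using 0 by (simp add: pmf_map)
next
  case (Suc n)
  then show ?thesis using pmf_map_inj'[of Suc M n] by simp
qed

lemma ins_pmf: "pmf (ins x) k = (if k < x then (1/2)^(k+1) else if k = x then (1/2)^k else 0)"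
proof (induction x arbitrary: k)
  case 0
  then show ?case by (simp add: indicator_def)
next
  case (Suc x)
  have "pmf (ins (Suc x)) k = pmf (map_pmf Suc (ins x)) k * (1/2) + pmf (return_pmf (0::nat)) k * (1/2)"
    by (simp add: pmf_bind)
  also have "\<dots> = (if k < Suc x then (1/2)^(k+1) else if k = Suc x then (1/2)^k else 0)"
    by (cases k) (auto simp: pmf_map_Suc Suc.IH indicator_def)
  finally show ?case .
qed

lemma ins_set: "y \<in> set_pmf (ins x) \<Longrightarrow> y \<le> x"
  by (auto simp: set_pmf_iff ins_pmf split: if_splits)

lemma Kd_set: "x \<in> set_pmf (Kd m) \<Longrightarrow> x \<le> m"
proof (induction m arbitrary: x)
  case 0
  then show ?case by simp
next
  case (Suc m)
  then obtain y where y: "y \<in> set_pmf (Kd m)" "x \<in> set_pmf (step y)" by auto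
  then have "x \<le> Suc y" by (auto simp: step_def split: if_splits dest: ins_set)
  then show ?case using Suc.IH[OF y(1)] by simp
qed

lemma step_pmf: "pmf (step x) k = (if Suc x = k then 1/2 else 0) + 1/2 * pmf (ins x) k"
  by (simp add: step_def pmf_bind indicator_def)

lemma Kd_rec:
  assumes "k \<le> m"
  shows "pmf (Kd (Suc m)) k = (if k = 0 then 0 else pmf (Kd m) (k - 1) / 2)
     + (1/2)^(k+2) * pmf (Kd m) k + (1/2)^(k+2) * (1 - (\<Sum>i<k. pmf (Kd m) i))"
proof -
  define a where "a = pmf (Kd m)"
  have S1: "(\<Sum>x\<le>m. a x) = 1" unfolding a_def
    by (rule sum_pmf_eq_1) (auto dest: Kd_set)
  have "pmf (Kd (Suc m)) k = (\<Sum>x\<le>m. pmf (step x) k * a x)"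
    unfolding a_def by (simp add: pmf_bind) (rule integral_measure_pmf_real, auto dest: Kd_set)
  also have "\<dots> = (\<Sum>x\<le>m. (if Suc x = k then 1/2 else 0) * a x) + 1/2 * (\<Sum>x\<le>m. pmf (ins x) k * a x)"
    by (simp add: step_pmf algebra_simps sum.distrib sum_distrib_left)
  also have "(\<Sum>x\<le>m. (if Suc x = k then 1/2 else 0) * a x) = (if k = 0 then 0 else a (k - 1) / 2)"
  proof (cases k)
    case 0
    then show ?thesis by simp
  next
    case (Suc n)
    then have "(\<Sum>x\<le>m. (if Suc x = k then 1/2 else 0) * a x) = (\<Sum>x\<le>m. if x = n then a x / 2 else 0)"
      by (intro sum.cong) auto
    also have "\<dots> = a n / 2" using Suc assms by simp
    finally show ?thesis using Suc by simp
  qed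
  also have "(\<Sum>x\<le>m. pmf (ins x) k * a x) = (\<Sum>x\<in>{..m}-{..k}. pmf (ins x) k * a x) + (\<Sum>x\<le>k. pmf (ins x) k * a x)"
    using assms by (intro sum.subset_diff) auto
  also have "(\<Sum>x\<in>{..m}-{..k}. pmf (ins x) k * a x) = (1/2)^(k+1) * (\<Sum>x\<in>{..m}-{..k}. a x)"
    by (simp add: sum_distrib_left ins_pmf)
  also have "(\<Sum>x\<le>k. pmf (ins x) k * a x) = (\<Sum>x\<le>k. if x = k then (1/2)^k * a x else 0)"
    by (intro sum.cong) (auto simp: ins_pmf)
  also have "\<dots> = (1/2)^k * a k" by simp
  also have "(\<Sum>x\<in>{..m}-{..k}. a x) = 1 - (\<Sum>x\<le>k. a x)"
    using S1 sum.subset_diff[of "{..k}" "{..m}" a] assms by auto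
  also have "(\<Sum>x\<le>k. a x) = (\<Sum>x<k. a x) + a k"
    by (simp add: lessThan_Suc_atMost[symmetric])
  finally have "pmf (Kd (Suc m)) k = (if k = 0 then 0 else a (k - 1) / 2) +
    1 / 2 * ((1 / 2) ^ (k + 1) * (1 - ((\<Sum>x<k. a x) + a k)) + (1 / 2) ^ k * a k)" .
  moreover have "1 / 2 * ((1 / 2) ^ (k + 1) * (1 - ((\<Sum>x<k. a x) + a k)) + (1 / 2) ^ k * a k)
     = (1/2)^(k+2) * a k + (1/2)^(k+2) * (1 - (\<Sum>i<k. a i))"
    by (simp add: power_add field_simps)
  ultimately show ?thesis unfolding a_def by simp
qed


lemma affine_conv:
  fixes x b :: "nat \<Rightarrow> real"
  assumes c: "0 \<le> c" "c < 1" and b: "b \<longlonglongrightarrow> \<beta>"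
    and rec: "\<forall>n\<ge>N. x (Suc n) = c * x n + b n"
  shows "x \<longlonglongrightarrow> \<beta> / (1 - c)"
proof -
  define L where "L = \<beta> / (1 - c)"
  have L: "L = c * L + \<beta>" using c unfolding L_def by (simp add: field_simps)
  define y where "y n = x n - L" for n
  have yrec: "y (Suc n) = c * y n + (b n - \<beta>)" if "n \<ge> N" for n
    using rec that L unfolding y_def by (simp add: algebra_simps)
  have e0: "(\<lambda>n. b n - \<beta>) \<longlonglongrightarrow> 0" using b by (simp add: LIM_zero)
  show ?thesis
    unfolding L_def[symmetric] LIMSEQ_iff
  proof (intro allI impI)
    fix r :: real assume r: "r > 0"
    have "r * (1 - c) / 2 > 0" using r c by simp
    with e0 obtain M0 where M0: "\<forall>n\<ge>M0. norm (b n - \<beta> - 0) < r * (1 - c) / 2"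
      unfolding LIMSEQ_iff by blast
    define M where "M = max M0 N"
    have claim: "\<bar>y (M + d)\<bar> \<le> c ^ d * \<bar>y M\<bar> + r / 2" for d
    proof (induction d)
      case 0
      then show ?case using r by simp
    next
      case (Suc d)
      have e: "\<bar>b (M + d) - \<beta>\<bar> \<le> r * (1 - c) / 2"
        using M0 unfolding M_def by (simp add: less_imp_le)
      have "\<bar>y (M + Suc d)\<bar> = \<bar>c * y (M + d) + (b (M + d) - \<beta>)\<bar>"
        using yrec[of "M + d"] unfolding M_def by simp
      also have "\<dots> \<le> c * \<bar>y (M + d)\<bar> + \<bar>b (M + d) - \<beta>\<bar>"
        using c by (simp add: abs_mult abs_triangle_ineq order_trans[OF abs_triangle_ineq])
      also have "\<dots> \<le> c * (c ^ d * \<bar>y M\<bar> + r / 2) + r * (1 - c) / 2"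
        using Suc.IH c e by (intro add_mono mult_left_mono) auto
      also have "\<dots> = c ^ Suc d * \<bar>y M\<bar> + r / 2" by (simp add: field_simps)
      finally show ?case .
    qed
    have "(\<lambda>d. c ^ d * \<bar>y M\<bar>) \<longlonglongrightarrow> 0"
      using c by (intro tendsto_mult_left_zero LIMSEQ_power_zero) simp
    then obtain D where D: "\<forall>d\<ge>D. norm (c ^ d * \<bar>y M\<bar> - 0) < r / 2"
      using r unfolding LIMSEQ_iff by (metis half_gt_zero)
    show "\<exists>no. \<forall>n\<ge>no. norm (x n - L) < r"
    proof (intro exI allI impI)
      fix n assume n: "n \<ge> M + D"
      then have "n = M + (n - M)" "n - M \<ge> D" by auto
      then have "\<bar>y n\<bar> \<le> c ^ (n - M) * \<bar>y M\<bar> + r / 2" using claim by metis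
      moreover have "c ^ (n - M) * \<bar>y M\<bar> < r / 2" using D \<open>n - M \<ge> D\<close> c by auto
      ultimately show "norm (x n - L) < r" unfolding y_def by simp
    qed
  qed
qed


definition Lm :: "nat \<Rightarrow> real" where
  "Lm k = lim (\<lambda>m. pmf (Kd m) k)"

definition cc :: "nat \<Rightarrow> real" where
  "cc k = (1/2) ^ (k + 2)"

definition beta :: "nat \<Rightarrow> real" where
  "beta k = (if k = 0 then 0 else Lm (k - 1) / 2) + cc k * (1 - (\<Sum>i<k. Lm i))"

lemma cc_bounds: "0 \<le> cc k" "cc k < 1" "cc k \<le> 1/4"
proof -
  show "0 \<le> cc k" by (simp add: cc_def)
  have "(1/2::real) ^ (k + 2) \<le> (1/2) ^ 2" by (rule power_decreasing) auto
  then show "cc k \<le> 1/4" by (simp add: cc_def power2_eq_square)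
  then show "cc k < 1" by simp
qed

lemma conv_all: "(\<lambda>m. pmf (Kd m) k) \<longlonglongrightarrow> beta k / (1 - cc k)"
proof (induction k rule: less_induct)
  case (less k)
  have IH: "(\<lambda>m. pmf (Kd m) i) \<longlonglongrightarrow> Lm i" if "i < k" for i
    using less[OF that] unfolding Lm_def by (simp add: limI)
  define b where "b m = (if k = 0 then 0 else pmf (Kd m) (k - 1) / 2) + cc k * (1 - (\<Sum>i<k. pmf (Kd m) i))" for m
  have b: "b \<longlonglongrightarrow> beta k"
    unfolding b_def beta_def
  proof (intro tendsto_add tendsto_mult tendsto_const tendsto_diff tendsto_sum)
    show "(\<lambda>m. if k = 0 then 0 else pmf (Kd m) (k - 1) / 2) \<longlonglongrightarrow> (if k = 0 then 0 else Lm (k - 1) / 2)"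
      using IH[of "k - 1"] by (cases "k = 0") (auto intro: tendsto_divide)
    show "\<And>i. i \<in> {..<k} \<Longrightarrow> (\<lambda>m. pmf (Kd m) i) \<longlonglongrightarrow> Lm i" using IH by auto
  qed
  have rec: "\<forall>m\<ge>k. pmf (Kd (Suc m)) k = cc k * pmf (Kd m) k + b m"
    using Kd_rec unfolding b_def cc_def by (simp add: algebra_simps)
  show ?case using affine_conv[OF cc_bounds(1,2) b rec] .
qed

lemma Lim_eq: "Lm k = beta k / (1 - cc k)"
  unfolding Lm_def using conv_all by (rule limI)

lemma Lim_conv: "(\<lambda>m. pmf (Kd m) k) \<longlonglongrightarrow> Lm k"
  using conv_all Lim_eq by simp

lemma Lim_nonneg: "Lm k \<ge> 0"
  by (rule LIMSEQ_le_const[OF Lim_conv]) auto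

lemma Lim_sum_le: "(\<Sum>i<k. Lm i) \<le> 1"
proof (rule LIMSEQ_le_const2)
  show "(\<lambda>m. \<Sum>i<k. pmf (Kd m) i) \<longlonglongrightarrow> (\<Sum>i<k. Lm i)"
    by (intro tendsto_sum Lim_conv)
  show "\<exists>N. \<forall>n\<ge>N. (\<Sum>i<k. pmf (Kd n) i) \<le> 1"
    by (auto simp: measure_measure_pmf_finite[symmetric] measure_pmf.prob_le_1)
qed

lemma Lim0: "Lm 0 = 1/3"
  using Lim_eq[of 0] by (simp add: beta_def cc_def)

lemma Lim1: "Lm 1 = 2/7"
  using Lim_eq[of 1] by (simp add: beta_def cc_def Lim0)

lemma Lim_half: "k \<ge> 1 \<Longrightarrow> Lm k \<ge> Lm (k - 1) / 2"
proof -
  assume k: "k \<ge> 1"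
  have b1: "beta k \<ge> Lm (k - 1) / 2"
    using k cc_bounds(1)[of k] Lim_sum_le[of k] by (simp add: beta_def)
  then have b0: "beta k \<ge> 0" using Lim_nonneg[of "k - 1"] by linarith
  have "beta k \<le> beta k / (1 - cc k)"
    using b0 cc_bounds[of k] by (simp add: le_divide_eq mult_left_le)
  then show ?thesis using b1 Lim_eq[of k] by linarith
qed

lemma Lim_bound: "k \<ge> 1 \<Longrightarrow> Lm k \<ge> 4/7 * (1/2) ^ k"
proof (induction k)
  case 0
  then show ?case by simp
next
  case (Suc k)
  show ?case
  proof (cases "k = 0")
    case True
    then show ?thesis using Lim1 by simp
  next
    case False
    then have "Lm k \<ge> 4/7 * (1/2) ^ k" using Suc by simp
    moreover have "Lm (Suc k) \<ge> Lm k / 2" using Lim_half[of "Suc k"] by simp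
    ultimately show ?thesis by simp
  qed
qed

lemma prob_L_conv: "(\<lambda>m. prob_L TSO m mu) \<longlonglongrightarrow> Lm mu"
proof -
  have "eventually (\<lambda>m. pmf (Kd m) mu = prob_L TSO m mu) sequentially"
    unfolding eventually_sequentially
  proof (intro exI allI impI)
    fix m assume "Suc mu \<le> m"
    then show "pmf (Kd m) mu = prob_L TSO m mu" using prob_L_eq[of mu m] by simp
  qed
  then show ?thesis using Lim_conv[of mu] by (simp only: tendsto_cong)
qed

theorem lemma1:
  shows "(\<lambda>m. prob_L TSO m 0) \<longlonglongrightarrow> 1/3
    \<and> (\<forall>mu::nat. mu > 0 \<longrightarrow>
         (\<exists>l. (\<lambda>m. prob_L TSO m mu) \<longlonglongrightarrow> l \<and> l \<ge> 4/7 * (1/2) ^ mu))"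
proof (intro conjI allI impI)
  show "(\<lambda>m. prob_L TSO m 0) \<longlonglongrightarrow> 1/3" using prob_L_conv[of 0] Lim0 by simp
  fix mu :: nat assume "mu > 0"
  then show "\<exists>l. (\<lambda>m. prob_L TSO m mu) \<longlonglongrightarrow> l \<and> l \<ge> 4/7 * (1/2) ^ mu"
    using prob_L_conv[of mu] Lim_bound[of mu] by auto
qed

end
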